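(* Let $n,k$ be positive integers with $k$ odd and $\gcd(k,n)=1$, let $d=\frac{3^k+1}{2}$ and $F(x)=x^d$ on $\mathrm{GF}(3^n)$. Then $F$ is almost perfect $c$-nonlinear for $c=-1$.
   Context: For a function $F:\mathrm{GF}(p^n)\to\mathrm{GF}(p^n)$ and $a,b,c\in\mathrm{GF}(p^n)$, let ${}_c\Delta_F(a,b)=\#\{x\in\mathrm{GF}(p^n): F(x+a)-cF(x)=b\}$. The $c$-differential uniformity of $F$ is ${}_c\Delta_F=\max\{{}_c\Delta_F(a,b): a,b\in\mathrm{GF}(p^n),\ \text{and } a\neq 0 \text{ if } c=1\}$. $F$ is almost perfect $c$-nonlinear (AP$c$N) if ${}_c\Delta_F=2$. *)

theory Defs
  imports Main
begin

definition c_diff_count :: "('a::{finite,field} \<Rightarrow> 'a) \<Rightarrow> 'a \<Rightarrow> 'a \<Rightarrow> 'a \<Rightarrow> nat" where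
  "c_diff_count F c a b = card {x. F (x + a) - c * F x = b}"

definition c_diff_uniformity :: "('a::{finite,field} \<Rightarrow> 'a) \<Rightarrow> 'a \<Rightarrow> nat" where
  "c_diff_uniformity F c =
     Max {c_diff_count F c a b | a b. c \<noteq> 1 \<or> a \<noteq> 0}"

definition APcN :: "('a::{finite,field} \<Rightarrow> 'a) \<Rightarrow> 'a \<Rightarrow> bool" where
  "APcN F c \<longleftrightarrow> c_diff_uniformity F c = 2"

end

theory Submission
  imports Defs
begin

lemma frob3:
  fixes x y :: "'r::comm_ring_1"
  assumes "(3::'r) = 0"
  shows "(x + y) ^ (3 ^ j) = x ^ (3 ^ j) + y ^ (3 ^ j)"
proof (induction j)
  case 0 then show ?case by simp
next
  case (Suc j)
  have c: "(a + b) ^ 3 = a ^ 3 + b ^ 3" for a b :: 'r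
  proof -
    have "(a + b) ^ 3 = a^3 + b^3 + 3 * (a*a*b + a*b*b)"
      by (simp add: power3_eq_cube algebra_simps)
    then show ?thesis using assms by simp
  qed
  have "(x + y) ^ (3 ^ Suc j) = ((x + y) ^ (3 ^ j)) ^ 3"
    by (simp add: power_mult[symmetric] mult.commute)
  also have "\<dots> = (x ^ (3 ^ j)) ^ 3 + (y ^ (3 ^ j)) ^ 3" using Suc c by simp
  also have "\<dots> = x ^ (3 ^ Suc j) + y ^ (3 ^ Suc j)"
    by (simp add: power_mult[symmetric] mult.commute)
  finally show ?case .
qed

lemma pow_fix_add:
  fixes x :: "'r::monoid_mult"
  assumes "x ^ (p ^ a) = x" "x ^ (p ^ b) = x"
  shows "x ^ (p ^ (a + b)) = x"
  by (metis assms power_add power_mult)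

lemma pow_fix_mult:
  fixes x :: "'r::monoid_mult"
  assumes "x ^ (p ^ a) = x"
  shows "x ^ (p ^ (a * c)) = x"
proof (induction c)
  case 0 then show ?case by simp
next
  case (Suc c) then show ?case using pow_fix_add[OF assms Suc] by (simp add: add.commute)
qed

lemma pow_fix_sub:
  fixes x :: "'r::monoid_mult"
  assumes "x ^ (p ^ (c + g)) = x" "x ^ (p ^ c) = x"
  shows "x ^ (p ^ g) = x"
  by (metis assms power_add power_mult)

lemma pow_fix_gcd:
  fixes x :: "'r::monoid_mult"
  assumes "x ^ (p ^ a) = x" "x ^ (p ^ b) = x" "a \<noteq> 0"
  shows "x ^ (p ^ gcd a b) = x"
proof -
  obtain u v where uv: "a * u = b * v + gcd a b" using bezout_nat[OF assms(3)] by blast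
  have 1: "x ^ (p ^ (a * u)) = x" by (rule pow_fix_mult[OF assms(1)])
  have 2: "x ^ (p ^ (b * v)) = x" by (rule pow_fix_mult[OF assms(2)])
  show ?thesis using pow_fix_sub[of x p "b*v" "gcd a b"] 1 2 uv by simp
qed

lemma three_pow_odd_mod8:
  assumes "odd k" shows "(3::nat) ^ k mod 8 = 3"
proof -
  obtain m where k: "k = 2*m+1" using assms oddE by blast
  have "(3::nat) ^ (2*m+1) mod 8 = 3"
  proof (induction m)
    case 0 then show ?case by simp
  next
    case (Suc m)
    have e: "(3::nat) ^ (2*Suc m+1) = 9 * 3 ^ (2*m+1)" by simp
    have "(9 * (3::nat) ^ (2*m+1)) mod 8 = (9 * ((3::nat) ^ (2*m+1) mod 8)) mod 8"
      by (rule mod_mult_right_eq[symmetric])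
    then show ?case using Suc e by simp
  qed
  then show ?thesis using k by simp
qed

lemma key_pow:
  fixes t :: "'r::comm_ring_1"
  assumes tt: "t * t' = 1" and q: "t ^ (3 ^ k + 1) = 1" and f: "t ^ (3 ^ (2 * n)) = t"
    and k: "odd k" and cop: "coprime k n"
  shows "t ^ 4 = 1"
proof -
  have tq: "t ^ (3 ^ k) = t'"
  proof -
    have "t ^ (3 ^ k) * t = 1" using q by (simp add: mult.commute)
    hence "t ^ (3 ^ k) * t * t' = t'" by simp
    thus ?thesis using tt by (simp add: mult.assoc)
  qed
  have "(t * t') ^ (3 ^ k) = 1" using tt by simp
  hence "t' * t' ^ (3 ^ k) = 1" using tq by (simp add: power_mult_distrib)
  hence "t * (t' * t' ^ (3 ^ k)) = t" by simp
  hence t'q: "t' ^ (3 ^ k) = t" using tt by (simp add: mult.assoc[symmetric])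
  have P2k: "t ^ (3 ^ (2 * k)) = t"
    by (metis mult_2 power_add power_mult tq t'q)
  have g: "gcd (2 * k) (2 * n) = 2"
    using cop by (simp add: gcd_mult_distrib_nat[symmetric] coprime_iff_gcd_eq_1)
  have "k \<noteq> 0" using k by (metis odd_pos less_irrefl)
  hence "t ^ (3 ^ 2) = t" using pow_fix_gcd[OF P2k f] g by simp
  hence "t ^ 8 * t = t" by (simp add: power_Suc2[symmetric])
  hence t8: "t ^ 8 = 1" using tt by (metis mult.assoc mult_1_right)
  have e: "(3::nat) ^ k + 1 = 8 * ((3 ^ k) div 8) + 4"
  proof -
    have "(3::nat) ^ k = 8 * ((3 ^ k) div 8) + (3 ^ k) mod 8" by simp
    thus ?thesis using three_pow_odd_mod8[OF k] by linarith
  qed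
  have "t ^ (3 ^ k + 1) = t ^ (8 * ((3 ^ k) div 8) + 4)" by (simp only: e)
  also have "\<dots> = (t ^ 8) ^ ((3 ^ k) div 8) * t ^ 4" by (simp only: power_add power_mult)
  finally have "t ^ (3 ^ k + 1) = (t ^ 8) ^ ((3 ^ k) div 8) * t ^ 4" .
  thus ?thesis using q t8 by simp
qed

lemma char_card: "of_nat (card (UNIV :: 'a::{finite,field} set)) = (0::'a)"
proof -
  have b: "bij_betw (\<lambda>x::'a. x + 1) UNIV UNIV"
    by (rule bij_betw_byWitness[where f' = "\<lambda>x. x - 1"]) auto
  have "(\<Sum>x\<in>UNIV. x + 1) = (\<Sum>x\<in>(UNIV::'a set). x)"
    using sum.reindex_bij_betw[OF b, of "\<lambda>x. x"] by simp
  hence "(\<Sum>x\<in>(UNIV::'a set). x) + (\<Sum>x\<in>(UNIV::'a set). 1) = (\<Sum>x\<in>(UNIV::'a set). x)"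
    by (simp add: sum.distrib)
  thus ?thesis by simp
qed

lemma three_zero:
  assumes "card (UNIV :: 'a::{finite,field} set) = 3 ^ n"
  shows "(3::'a) = 0"
proof -
  have "(of_nat (3 ^ n) :: 'a) = 0" using char_card[where 'a='a] assms by simp
  hence "(3::'a) ^ n = 0" by simp
  thus ?thesis by simp
qed

lemma fermat:
  fixes x :: "'a::{finite,field}"
  shows "x ^ card (UNIV :: 'a set) = x"
proof (cases "x = 0")
  case True
  have "card (UNIV :: 'a set) > 0" by (simp add: finite_UNIV_card_ge_0)
  then show ?thesis using True by (simp add: zero_power)
next
  case False
  let ?U = "UNIV - {0::'a}"
  have b: "bij_betw (\<lambda>y. x * y) ?U ?U"
    by (rule bij_betw_byWitness[where f' = "\<lambda>y. y / x"]) (use False in auto)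
  have "(\<Prod>y\<in>?U. x * y) = (\<Prod>y\<in>?U. y)"
    using prod.reindex_bij_betw[OF b, of "\<lambda>y. y"] by simp
  hence "x ^ card ?U * (\<Prod>y\<in>?U. y) = (\<Prod>y\<in>?U. y)"
    by (simp add: prod.distrib)
  moreover have "(\<Prod>y\<in>?U. y) \<noteq> 0" by simp
  ultimately have "x ^ card ?U = 1" by simp
  moreover have "card ?U + 1 = card (UNIV :: 'a set)"
    by (simp add: card_Diff_singleton finite_UNIV_card_ge_0 Suc_leI)
  ultimately show ?thesis by (metis power_add power_one_right mult_1)
qed

lemma nonsquare_ex:
  assumes "(3::'a::{finite,field}) = 0"
  shows "\<exists>v::'a. \<forall>x. x * x \<noteq> v"
proof (rule ccontr)
  assume "\<not> ?thesis"
  hence "UNIV \<subseteq> (\<lambda>x::'a. x * x) ` UNIV" by (auto simp: image_iff) (metis)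
  hence "inj (\<lambda>x::'a. x * x)" using finite_surj_inj[of UNIV "\<lambda>x::'a. x * x"] by simp
  moreover have "(1::'a) \<noteq> -1"
  proof
    assume "(1::'a) = -1"
    hence "(2::'a) = 0" by (simp add: eq_neg_iff_add_eq_0 one_add_one)
    hence "(3::'a) = 1" by (metis add_0 numeral_plus_one semiring_norm(5))
    thus False using assms by simp
  qed
  ultimately show False by (metis injD mult_minus_left mult_minus_right minus_minus mult_1)
qed

lemma sq_eq: "(x::'a::field) * x = r * r \<Longrightarrow> x = r \<or> x = - r"
proof -
  assume "x * x = r * r"
  hence "(x - r) * (x + r) = 0" by (simp add: algebra_simps)
  thus ?thesis by (auto simp: eq_neg_iff_add_eq_0)
qed

lemma squares_cover:
  fixes nu c :: "'a::{finite,field}"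
  assumes ns: "\<forall>x. x * x \<noteq> nu"
  shows "(\<exists>a. c = a * a) \<or> (\<exists>b. c = nu * (b * b))"
proof -
  define S where "S = range (\<lambda>x::'a. x * x)"
  define T where "T = (\<lambda>y. nu * y) ` S"
  have nu0: "nu \<noteq> 0" using ns by (metis mult_zero_left)
  have fS: "finite S" "finite T" by auto
  have 0: "0 \<in> S" "0 \<in> T" unfolding S_def T_def by (auto simp: image_iff)
  have cT: "card T = card S" unfolding T_def
    by (rule card_image) (use nu0 in \<open>auto simp: inj_on_def\<close>)
  have ST: "S \<inter> T = {0}"
  proof
    show "S \<inter> T \<subseteq> {0}"
    proof
      fix z assume "z \<in> S \<inter> T"
      then obtain r w where r: "z = r * r" and w: "z = nu * (w * w)" unfolding S_def T_def by blast
      show "z \<in> {0}"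
      proof (rule ccontr)
        assume "z \<notin> {0}"
        hence "w \<noteq> 0" using w by auto
        hence "(r / w) * (r / w) = nu" using r w by (simp add: field_simps)
        thus False using ns by blast
      qed
    qed
    show "{0} \<subseteq> S \<inter> T" using 0 by auto
  qed
  have fib: "card {x. x * x = s} \<le> (if s = 0 then 1 else 2)" if "s \<in> S" for s
  proof -
    obtain r where r: "s = r * r" using \<open>s \<in> S\<close> unfolding S_def by auto
    have "{x. x * x = s} \<subseteq> {r, -r}" using sq_eq r by auto
    hence "card {x. x * x = s} \<le> card {r, - r}" by (intro card_mono) auto
    also have "\<dots> \<le> 2" by (simp add: card_insert_le_m1)
    finally have a: "card {x. x * x = s} \<le> 2" .
    have "s = 0 \<Longrightarrow> {x. x * x = s} = {0}" by auto
    thus ?thesis using a by auto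
  qed
  have U: "UNIV = (\<Union>s\<in>S. {x. x * x = s})" unfolding S_def by auto
  have "card (UNIV :: 'a set) \<le> (\<Sum>s\<in>S. card {x. x * x = s})"
    by (subst U) (rule card_UN_le[OF fS(1)])
  also have "\<dots> \<le> (\<Sum>s\<in>S. (if s = 0 then 1 else 2))" by (rule sum_mono) (rule fib)
  also have "\<dots> = 1 + (\<Sum>s\<in>S - {0}. (if s = 0 then 1 else 2))"
    using 0 fS by (simp add: sum.remove)
  also have "\<dots> = 1 + 2 * (card S - 1)" using 0 by simp
  finally have cU: "card (UNIV :: 'a set) \<le> 1 + 2 * (card S - 1)" .
  have "card (S \<union> T) + card (S \<inter> T) = card S + card T" using card_Un_Int[OF fS] by simp
  hence "card (S \<union> T) + 1 = 2 * card S" using ST cT by simp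
  moreover have "card S \<ge> 1" using 0 fS by (metis card_0_eq empty_iff less_one not_le)
  ultimately have "card (UNIV :: 'a set) \<le> card (S \<union> T)" using cU by linarith
  hence "S \<union> T = UNIV" by (intro card_seteq) auto
  hence "c \<in> S \<union> T" by auto
  thus ?thesis unfolding S_def T_def by auto
qed

definition nu :: "'a::comm_ring_1" where "nu = (SOME v. \<forall>x. x * x \<noteq> v)"

datatype 'a ext = Ext (re: 'a) (im: 'a)

lemma ext_eqI: "re x = re y \<Longrightarrow> im x = im y \<Longrightarrow> x = y"
  by (cases x, cases y) auto

instantiation ext :: (comm_ring_1) comm_ring_1
begin
definition "0 = Ext 0 0"
definition "1 = Ext 1 0"
definition "x + y = Ext (re x + re y) (im x + im y)"
definition "- x = Ext (- re x) (- im x)"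
definition "x - y = Ext (re x - re y) (im x - im y)"
definition "x * y = Ext (re x * re y + nu * im x * im y) (re x * im y + im x * re y)"
instance
  by standard (auto intro!: ext_eqI simp: zero_ext_def one_ext_def plus_ext_def uminus_ext_def
      minus_ext_def times_ext_def algebra_simps)
end

lemma re_simps [simp]:
  "re 0 = 0" "im 0 = 0" "re 1 = 1" "im 1 = 0"
  "re (x + y) = re x + re y" "im (x + y) = im x + im y"
  "re (- x) = - re x" "im (- x) = - im x"
  "re (x - y) = re x - re y" "im (x - y) = im x - im y"
  "re (x * y) = re x * re y + nu * im x * im y" "im (x * y) = re x * im y + im x * re y"
  by (simp_all add: zero_ext_def one_ext_def plus_ext_def uminus_ext_def minus_ext_def times_ext_def)

definition emb :: "'a::comm_ring_1 \<Rightarrow> 'a ext" where "emb a = Ext a 0"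

lemma emb_simps [simp]: "re (emb a) = a" "im (emb a) = 0" by (simp_all add: emb_def)

lemma emb_mult: "emb (a * b) = emb a * emb b" by (rule ext_eqI) simp_all
lemma emb_add: "emb (a + b) = emb a + emb b" by (rule ext_eqI) simp_all
lemma emb_minus: "emb (- a) = - emb a" by (rule ext_eqI) simp_all
lemma emb_inj: "emb a = emb b \<Longrightarrow> a = b" by (metis emb_simps(1))
lemma emb_one: "emb 1 = 1" by (rule ext_eqI) simp_all
lemma emb_zero: "emb 0 = 0" by (rule ext_eqI) simp_all
lemma emb_pow: "emb (a ^ m) = emb a ^ m"
  by (induction m) (simp_all add: emb_mult emb_one)
lemma of_nat_ext: "(of_nat m :: 'a::comm_ring_1 ext) = emb (of_nat m)"
  by (induction m) (simp_all add: emb_add emb_one emb_zero)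
lemma three_ext: "(3::'a::comm_ring_1) = 0 \<Longrightarrow> (3::'a ext) = 0"
proof -
  assume "(3::'a) = 0"
  have "(3::'a ext) = of_nat 3" by simp
  also have "\<dots> = emb (of_nat 3)" by (rule of_nat_ext)
  also have "\<dots> = 0" using \<open>(3::'a) = 0\<close> by (simp add: emb_def zero_ext_def)
  finally show ?thesis .
qed

definition "sq = (Ext 0 1 :: 'a::comm_ring_1 ext)"
lemma sq_sq: "sq * sq = emb nu" by (rule ext_eqI) (simp_all add: sq_def)
lemma ext_decomp: "z = emb (re z) + emb (im z) * sq" by (rule ext_eqI) (simp_all add: sq_def)

context
  assumes ns: "\<forall>x::'a::{finite,field}. x * x \<noteq> nu"
begin

definition nrm :: "'a ext \<Rightarrow> 'a" where "nrm z = re z * re z - nu * im z * im z"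

lemma nrm_mult: "nrm (z * w) = nrm z * nrm w"
  by (simp add: nrm_def algebra_simps)

lemma nrm_zero: "nrm z = 0 \<Longrightarrow> z = 0"
proof -
  assume n: "nrm z = 0"
  show "z = 0"
  proof (cases "im z = 0")
    case True
    then show ?thesis using n by (intro ext_eqI) (simp_all add: nrm_def)
  next
    case False
    hence "(re z / im z) * (re z / im z) = nu" using n by (simp add: nrm_def field_simps)
    thus ?thesis using ns by blast
  qed
qed

lemma ext_dom: "(z::'a ext) * w = 0 \<Longrightarrow> z = 0 \<or> w = 0"
proof -
  assume "z * w = 0"
  hence "nrm z * nrm w = 0" using nrm_mult[of z w] by (simp add: nrm_def)
  thus ?thesis using nrm_zero by auto
qed

lemma ext_inv: "(z::'a ext) \<noteq> 0 \<Longrightarrow> \<exists>z'. z * z' = 1"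
proof -
  assume z: "z \<noteq> 0"
  hence n: "nrm z \<noteq> 0" using nrm_zero by blast
  have a: "re z * (re z / nrm z) + nu * im z * (- im z / nrm z) = nrm z / nrm z"
    by (simp add: nrm_def field_simps)
  have b: "re z * (- im z / nrm z) + im z * (re z / nrm z) = 0"
    by (simp add: field_simps)
  show ?thesis
    by (rule exI[of _ "Ext (re z / nrm z) (- im z / nrm z)"], rule ext_eqI)
       (use n a b in simp_all)
qed

lemma ext_sqrt: "\<exists>u. u * u = emb (c::'a)"
proof -
  from squares_cover[OF ns, of c] show ?thesis
  proof
    assume "\<exists>a. c = a * a"
    then obtain a where "c = a * a" by blast
    thus ?thesis by (intro exI[of _ "emb a"]) (simp add: emb_mult)
  next
    assume "\<exists>b. c = nu * (b * b)"
    then obtain b where "c = nu * (b * b)" by blast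
    hence "(emb b * sq) * (emb b * sq) = emb c"
      by (simp add: emb_mult sq_sq[symmetric] algebra_simps)
    thus ?thesis by blast
  qed
qed

lemma ext_fermat:
  assumes card: "card (UNIV :: 'a set) = 3 ^ n" and three: "(3::'a) = 0"
  shows "(z::'a ext) ^ (3 ^ (2 * n)) = z"
proof -
  let ?Q = "3 ^ n :: nat"
  have fa: "a ^ (3 ^ (2 * n)) = a" for a :: 'a
  proof -
    have "a ^ (3 ^ (2 * n)) = (a ^ ?Q) ^ ?Q" by (simp add: power_mult[symmetric] power_add[symmetric] mult_2)
    thus ?thesis using fermat[of a] card by simp
  qed
  have nu0: "nu \<noteq> (0::'a)" using ns by (metis mult_zero_left)
  have nuQ: "(nu::'a) ^ (?Q - 1) = 1"
  proof -
    have "nu ^ (?Q - 1) * nu = (nu::'a) ^ ?Q" by (simp add: power_Suc2[symmetric])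
    also have "\<dots> = nu" using fermat[of "nu::'a"] card by simp
    finally show ?thesis using nu0 by simp
  qed
  obtain P where P: "?Q = Suc P" by (metis not0_implies_Suc power_not_zero zero_neq_numeral)
  have "odd ?Q" by simp
  hence "even P" using P by simp
  then obtain h where h: "P = 2 * h" by blast
  have e: "(3::nat) ^ (2 * n) = 2 * (P * (h + 1)) + 1"
  proof -
    have "(3::nat) ^ (2 * n) = ?Q * ?Q" by (simp add: power_mult[symmetric] mult_2 power_add)
    thus ?thesis using P h by (simp add: algebra_simps)
  qed
  have "(sq::'a ext) ^ (3 ^ (2 * n)) = sq ^ (2 * (P * (h + 1)) + 1)" by (simp only: e)
  also have "\<dots> = (sq * sq) ^ (P * (h + 1)) * sq"
    by (simp only: power_add power_mult power2_eq_square power_one_right)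
  also have "\<dots> = emb ((nu ^ P) ^ (h + 1)) * sq" by (simp only: sq_sq emb_pow power_mult)
  also have "\<dots> = sq" using nuQ P by (simp add: emb_one)
  finally have s: "(sq::'a ext) ^ (3 ^ (2 * n)) = sq" .
  have t3: "(3::'a ext) = 0" by (rule three_ext[OF three])
  have "z ^ (3 ^ (2 * n)) = (emb (re z) + emb (im z) * sq) ^ (3 ^ (2 * n))"
    using ext_decomp[of z] by simp
  also have "\<dots> = emb (re z) ^ (3 ^ (2 * n)) + emb (im z) ^ (3 ^ (2 * n)) * sq ^ (3 ^ (2 * n))"
    by (simp add: frob3[OF t3] power_mult_distrib)
  also have "\<dots> = z" using s fa by (simp add: emb_pow[symmetric] ext_decomp[symmetric])
  finally show ?thesis .
qed

end

lemma value_id: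
  fixes u v :: "'r::comm_ring_1"
  assumes t: "(3::'r) = 0"
  shows "u ^ (3 ^ k + 1) + v ^ (3 ^ k + 1) = - ((u + v) ^ (3 ^ k + 1) + (u - v) ^ (3 ^ k + 1))"
proof -
  let ?q = "3 ^ k :: nat"
  have o: "odd ?q" by simp
  have a: "(u + v) ^ ?q = u ^ ?q + v ^ ?q" by (rule frob3[OF t])
  have "(u + (- v)) ^ ?q = u ^ ?q + (- v) ^ ?q" by (rule frob3[OF t])
  hence b: "(u - v) ^ ?q = u ^ ?q - v ^ ?q" using o by (simp add: power_minus_odd)
  have "(u + v) ^ (?q + 1) + (u - v) ^ (?q + 1) = (u ^ ?q + v ^ ?q) * (u + v) + (u ^ ?q - v ^ ?q) * (u - v)"
    using a b by simp
  also have "\<dots> = 2 * (u ^ (?q + 1) + v ^ (?q + 1))" by (simp add: algebra_simps)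
  also have "\<dots> = - (u ^ (?q + 1) + v ^ (?q + 1))"
  proof -
    have "(2::'r) = 3 - 1" by simp
    hence "(2::'r) = -1" using t by simp
    thus ?thesis by simp
  qed
  finally show ?thesis by simp
qed

lemma d_facts:
  assumes "odd k"
  shows "2 * ((3 ^ k + 1) div 2) = (3::nat) ^ k + 1"
    and "(3 ^ k + 1) div 2 = 4 * ((3::nat) ^ k div 8) + 2"
proof -
  have e: "(3::nat) ^ k = 8 * ((3 ^ k) div 8) + 3"
    using three_pow_odd_mod8[OF assms] div_mult_mod_eq[of "(3::nat)^k" 8] by linarith
  define m where "m = (3::nat) ^ k div 8"
  have e': "(3::nat) ^ k = 8 * m + 3" using e m_def by simp
  show "2 * ((3 ^ k + 1) div 2) = (3::nat) ^ k + 1" unfolding e' by simp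
  show "(3 ^ k + 1) div 2 = 4 * ((3::nat) ^ k div 8) + 2" unfolding m_def[symmetric] e' by simp
qed

lemma sub:
  fixes p p' r r' :: "'a::{finite,field} ext" and a x1 x2 :: 'a
  assumes ns: "\<forall>x::'a. x * x \<noteq> nu" and card: "card (UNIV :: 'a set) = 3 ^ n"
    and three: "(3::'a) = 0"
    and k: "odd k" and cop: "coprime k n" and a: "a \<noteq> 0"
    and pp: "p * p' = emb a" and rr: "r * r' = emb a"
    and x1: "(p' - p) * (p' - p) = emb x1" and x1a: "(p + p') * (p + p') = emb (x1 + a)"
    and x2: "(r' - r) * (r' - r) = emb x2"
    and Z: "p ^ (3 ^ k + 1) = r ^ (3 ^ k + 1)"
  shows "x2 = x1 \<or> x2 = - x1 - a"
proof -
  have ea: "emb a \<noteq> 0" using a emb_inj emb_zero by metis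
  have p0: "p \<noteq> 0" using pp ea by auto
  have r0: "r \<noteq> 0" using rr ea by auto
  obtain pi where pi: "p * pi = 1" using ext_inv[OF ns p0] by blast
  obtain ri where ri: "r * ri = 1" using ext_inv[OF ns r0] by blast
  define t where "t = r * pi"
  define t' where "t' = p * ri"
  have tt: "t * t' = 1" unfolding t_def t'_def
    by (metis (no_types, lifting) mult.assoc mult.left_commute mult_1_right pi ri)
  have "t ^ (3 ^ k + 1) = r ^ (3 ^ k + 1) * pi ^ (3 ^ k + 1)" unfolding t_def
    by (rule power_mult_distrib)
  also have "\<dots> = (p * pi) ^ (3 ^ k + 1)" unfolding Z[symmetric] by (rule power_mult_distrib[symmetric])
  finally have "t ^ (3 ^ k + 1) = (p * pi) ^ (3 ^ k + 1)" .
  hence tq: "t ^ (3 ^ k + 1) = 1" using pi by simp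
  have tf: "t ^ (3 ^ (2 * n)) = t" by (rule ext_fermat[OF ns card three])
  have t4: "t ^ 4 = 1" by (rule key_pow[OF tt tq tf k cop])
  have rtp: "r = t * p" unfolding t_def using pi by (metis mult.assoc mult.commute mult_1_right)
  have tr': "t * r' = p'"
  proof -
    have "t * p * r' = p * p'" using rr pp rtp by simp
    hence "pi * (p * (t * r')) = pi * (p * p')" by (simp add: algebra_simps)
    thus ?thesis using pi by (simp add: mult.assoc[symmetric] mult.commute[of pi])
  qed
  have "(t * t - 1) * (t * t + 1) = t ^ 4 - 1" by (simp add: algebra_simps power4_eq_xxxx)
  hence "(t * t - 1) * (t * t + 1) = 0" using t4 by simp
  hence "t * t - 1 = 0 \<or> t * t + 1 = 0" using ext_dom[OF ns] by blast
  hence dj: "t * t = 1 \<or> t * t = - 1" by (auto simp: eq_neg_iff_add_eq_0)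
  have key: "(t * t) * emb x2 = (p' - (t * t) * p) * (p' - (t * t) * p)"
  proof -
    have "(t * t) * emb x2 = (t * t) * ((r' - r) * (r' - r))" using x2 by simp
    also have "\<dots> = (t * r' - t * r) * (t * r' - t * r)" by (simp add: algebra_simps)
    also have "\<dots> = (p' - (t * t) * p) * (p' - (t * t) * p)" using tr' rtp by (simp add: mult.assoc)
    finally show ?thesis .
  qed
  from dj show ?thesis
  proof
    assume "t * t = 1"
    hence "emb x2 = emb x1" using key x1 by simp
    thus ?thesis using emb_inj by blast
  next
    assume "t * t = -1"
    hence "- emb x2 = (p + p') * (p + p')" using key by (simp add: algebra_simps)
    hence h: "- emb x2 = emb x1 + emb a" using x1a by (simp add: emb_add)
    have "emb (- x1 - a) = - (emb x1 + emb a)" by (rule ext_eqI) simp_all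
    hence "emb x2 = emb (- x1 - a)" using h by (metis minus_minus)
    thus ?thesis using emb_inj by blast
  qed
qed

lemma four_one: "(3::'r::comm_ring_1) = 0 \<Longrightarrow> (4::'r) = 1"
proof -
  assume "(3::'r) = 0"
  have "(4::'r) = 3 + 1" by simp
  thus ?thesis using \<open>(3::'r) = 0\<close> by simp
qed

lemma wfacts:
  fixes u v :: "'a::{finite,field} ext" and x a :: 'a
  assumes three: "(3::'a) = 0" and ku: "u * u = emb (x + a)" and kv: "v * v = emb x"
    and odd: "odd k"
  shows "(u + v) * (u - v) = emb a"
    and "((u - v) - (u + v)) * ((u - v) - (u + v)) = emb x"
    and "((u + v) + (u - v)) * ((u + v) + (u - v)) = emb (x + a)"
    and "emb ((x + a) ^ ((3 ^ k + 1) div 2) + x ^ ((3 ^ k + 1) div 2))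
         = - ((u + v) ^ (3 ^ k + 1) + (u - v) ^ (3 ^ k + 1))"
proof -
  have t3: "(3::'a ext) = 0" by (rule three_ext[OF three])
  have f4: "(4::'a ext) = 1" by (rule four_one[OF t3])
  have "(u + v) * (u - v) = u * u - v * v" by (simp add: algebra_simps)
  also have "\<dots> = emb a" using ku kv by (simp add: emb_add)
  finally show "(u + v) * (u - v) = emb a" .
  have "((u - v) - (u + v)) * ((u - v) - (u + v)) = 4 * (v * v)" by (simp add: algebra_simps)
  thus "((u - v) - (u + v)) * ((u - v) - (u + v)) = emb x" using f4 kv by simp
  have "((u + v) + (u - v)) * ((u + v) + (u - v)) = 4 * (u * u)" by (simp add: algebra_simps)
  thus "((u + v) + (u - v)) * ((u + v) + (u - v)) = emb (x + a)" using f4 ku by simp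
  let ?d = "(3 ^ k + 1) div 2 :: nat"
  have dd: "2 * ?d = (3::nat) ^ k + 1" by (rule d_facts(1)[OF odd])
  have "emb ((x + a) ^ ?d) = emb (x + a) ^ ?d" by (rule emb_pow)
  also have "\<dots> = (u * u) ^ ?d" using ku by (simp only:)
  also have "\<dots> = u ^ (3 ^ k + 1)" by (simp only: power2_eq_square[symmetric] power_mult[symmetric] dd)
  finally have 1: "emb ((x + a) ^ ?d) = u ^ (3 ^ k + 1)" .
  have "emb (x ^ ?d) = emb x ^ ?d" by (rule emb_pow)
  also have "\<dots> = (v * v) ^ ?d" using kv by (simp only:)
  also have "\<dots> = v ^ (3 ^ k + 1)" by (simp only: power2_eq_square[symmetric] power_mult[symmetric] dd)
  finally have 2: "emb (x ^ ?d) = v ^ (3 ^ k + 1)" .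
  show "emb ((x + a) ^ ?d + x ^ ?d) = - ((u + v) ^ (3 ^ k + 1) + (u - v) ^ (3 ^ k + 1))"
    using 1 2 value_id[OF t3, of u k v] by (simp add: emb_add)
qed

lemma claim_a:
  fixes a x1 x2 :: "'a::{finite,field}"
  assumes ns: "\<forall>x::'a. x * x \<noteq> nu" and card: "card (UNIV :: 'a set) = 3 ^ n"
    and three: "(3::'a) = 0"
    and k: "odd k" and cop: "coprime k n" and a: "a \<noteq> 0"
    and eq: "(x1 + a) ^ ((3 ^ k + 1) div 2) + x1 ^ ((3 ^ k + 1) div 2)
           = (x2 + a) ^ ((3 ^ k + 1) div 2) + x2 ^ ((3 ^ k + 1) div 2)"
  shows "x2 = x1 \<or> x2 = - x1 - a"
proof -
  obtain u1 where u1: "u1 * u1 = emb (x1 + a)" using ext_sqrt[OF ns] by blast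
  obtain v1 where v1: "v1 * v1 = emb x1" using ext_sqrt[OF ns] by blast
  obtain u2 where u2: "u2 * u2 = emb (x2 + a)" using ext_sqrt[OF ns] by blast
  obtain v2 where v2: "v2 * v2 = emb x2" using ext_sqrt[OF ns] by blast
  define w1 where "w1 = u1 + v1"
  define w1' where "w1' = u1 - v1"
  define w2 where "w2 = u2 + v2"
  define w2' where "w2' = u2 - v2"
  note f1 = wfacts[OF three u1 v1 k, folded w1_def w1'_def]
  note f2 = wfacts[OF three u2 v2 k, folded w2_def w2'_def]
  let ?q = "3 ^ k + 1 :: nat"
  define Z1 where "Z1 = w1 ^ ?q"
  define Z1' where "Z1' = w1' ^ ?q"
  define Z2 where "Z2 = w2 ^ ?q"
  define Z2' where "Z2' = w2' ^ ?q"
  have s: "Z1 + Z1' = Z2 + Z2'"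
  proof -
    have "- (Z1 + Z1') = - (Z2 + Z2')" using f1(4) f2(4) eq unfolding Z1_def Z1'_def Z2_def Z2'_def by simp
    thus ?thesis by (simp only: neg_equal_iff_equal)
  qed
  have p1: "Z1 * Z1' = (w1 * w1') ^ ?q" unfolding Z1_def Z1'_def by (rule power_mult_distrib[symmetric])
  have p2: "Z2 * Z2' = (w2 * w2') ^ ?q" unfolding Z2_def Z2'_def by (rule power_mult_distrib[symmetric])
  have p: "Z1 * Z1' = Z2 * Z2'" using p1 p2 f1(1) f2(1) by simp
  have "(Z2 - Z1) * (Z2 - Z1') = Z2 * Z2 - Z2 * (Z1 + Z1') + Z1 * Z1'" by (simp add: algebra_simps)
  also have "\<dots> = 0" using s p by (simp add: algebra_simps)
  finally have "Z2 - Z1 = 0 \<or> Z2 - Z1' = 0" using ext_dom[OF ns] by blast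
  hence "Z1 = Z2 \<or> Z1' = Z2" by auto
  thus ?thesis
  proof
    assume "Z1 = Z2"
    thus ?thesis using sub[OF ns card three k cop a f1(1) f2(1) f1(2) f1(3) f2(2)]
      unfolding Z1_def Z2_def by simp
  next
    assume z: "Z1' = Z2"
    have pp: "w1' * w1 = emb a" using f1(1) by (simp add: mult.commute)
    have "(w1 - w1') * (w1 - w1') = (w1' - w1) * (w1' - w1)" by (simp add: algebra_simps)
    hence x1: "(w1 - w1') * (w1 - w1') = emb x1" using f1(2) by (simp only:)
    have x1a: "(w1' + w1) * (w1' + w1) = emb (x1 + a)" using f1(3) by (simp only: add.commute[of w1' w1])
    show ?thesis using sub[OF ns card three k cop a pp f2(1) x1 x1a f2(2)] z
      unfolding Z1'_def Z2_def by simp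
  qed
qed

lemma claim_0:
  fixes x1 x2 :: "'a::{finite,field}"
  assumes card: "card (UNIV :: 'a set) = 3 ^ n"
    and three: "(3::'a) = 0"
    and k: "odd k" and cop: "coprime k n"
    and eq: "(x1 + 0) ^ ((3 ^ k + 1) div 2) + x1 ^ ((3 ^ k + 1) div 2)
           = (x2 + 0) ^ ((3 ^ k + 1) div 2) + x2 ^ ((3 ^ k + 1) div 2)"
  shows "x2 = x1 \<or> x2 = - x1 - 0"
proof -
  define d :: nat where "d = (3 ^ k + 1) div 2"
  have two: "(2::'a) \<noteq> 0"
  proof
    assume h: "(2::'a) = 0"
    have "(3::'a) = 2 + 1" by simp
    hence "(3::'a) = 1" using h by simp
    thus False using three by simp
  qed
  have "x1 ^ d + x1 ^ d = x2 ^ d + x2 ^ d" using eq unfolding d_def by simp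
  hence "2 * x1 ^ d = 2 * x2 ^ d" by (simp only: mult_2)
  hence e: "x1 ^ d = x2 ^ d" using two by simp
  have d0: "d \<noteq> 0" using d_facts(2)[OF k] unfolding d_def by simp
  show ?thesis
  proof (cases "x1 = 0 \<or> x2 = 0")
    case True
    then show ?thesis
    proof
      assume "x1 = 0"
      hence "x2 ^ d = 0" using e d0 by (simp add: zero_power)
      thus ?thesis using \<open>x1 = 0\<close> by simp
    next
      assume "x2 = 0"
      hence "x1 ^ d = 0" using e d0 by (simp add: zero_power)
      thus ?thesis using \<open>x2 = 0\<close> by simp
    qed
  next
    case False
    define t where "t = x2 / x1"
    define t' where "t' = x1 / x2"
    have tt: "t * t' = 1" unfolding t_def t'_def using False by simp
    have td: "t ^ d = 1" unfolding t_def using e False by (simp add: power_divide)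
    have "t ^ (3 ^ k + 1) = t ^ (d * 2)" unfolding d_def using d_facts(1)[OF k] by (simp add: mult.commute)
    also have "\<dots> = (t ^ d) ^ 2" by (rule power_mult)
    finally have tq: "t ^ (3 ^ k + 1) = 1" using td by simp
    have tf: "t ^ (3 ^ (2 * n)) = t"
    proof -
      have "t ^ (3 ^ (2 * n)) = (t ^ (3 ^ n)) ^ (3 ^ n)" by (simp add: power_mult[symmetric] power_add[symmetric] mult_2)
      thus ?thesis using fermat[of t] card by simp
    qed
    have t4: "t ^ 4 = 1" by (rule key_pow[OF tt tq tf k cop])
    have "t ^ d = t ^ (4 * (3 ^ k div 8) + 2)" unfolding d_def using d_facts(2)[OF k] by simp
    also have "\<dots> = (t ^ 4) ^ (3 ^ k div 8) * t ^ 2"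
      by (simp only: power_add power_mult)
    finally have "t ^ 2 = 1" using td t4 by simp
    hence "t * t = 1 * 1" by (simp add: power2_eq_square)
    hence "t = 1 \<or> t = -1" using sq_eq by blast
    moreover have "x2 = t * x1" unfolding t_def using False by simp
    ultimately show ?thesis by auto
  qed
qed

lemma count_le2:
  fixes a b :: "'a::{finite,field}"
  assumes card: "card (UNIV :: 'a set) = 3 ^ n" and k: "odd k" and cop: "coprime k n"
  shows "card {x. (x + a) ^ ((3 ^ k + 1) div 2) + x ^ ((3 ^ k + 1) div 2) = b} \<le> 2"
proof -
  have three: "(3::'a) = 0" by (rule three_zero[OF card])
  have ns: "\<forall>x::'a. x * x \<noteq> nu"
    unfolding nu_def using someI_ex[OF nonsquare_ex[OF three]] by blast
  let ?S = "{x. (x + a) ^ ((3 ^ k + 1) div 2) + x ^ ((3 ^ k + 1) div 2) = b}"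
  show ?thesis
  proof (cases "?S = {}")
    case True then show ?thesis by simp
  next
    case False
    then obtain x0 where x0: "x0 \<in> ?S" by blast
    have "?S \<subseteq> {x0, - x0 - a}"
    proof
      fix x assume x: "x \<in> ?S"
      have eq: "(x0 + a) ^ ((3 ^ k + 1) div 2) + x0 ^ ((3 ^ k + 1) div 2)
           = (x + a) ^ ((3 ^ k + 1) div 2) + x ^ ((3 ^ k + 1) div 2)" using x x0 by simp
      have "x = x0 \<or> x = - x0 - a"
      proof (cases "a = 0")
        case True
        then show ?thesis using claim_0[OF card three k cop, of x0 x] eq by simp
      next
        case False
        then show ?thesis using claim_a[OF ns card three k cop False eq] by simp
      qed
      thus "x \<in> {x0, - x0 - a}" by simp
    qed
    hence "card ?S \<le> card {x0, - x0 - a}" by (intro card_mono) auto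
    also have "\<dots> \<le> 2" by (simp add: card_insert_le_m1)
    finally show ?thesis .
  qed
qed

theorem theorem4:
  fixes n k :: nat
    and F :: "'a::{finite,field} \<Rightarrow> 'a"
  assumes "card (UNIV :: 'a set) = 3 ^ n"
    and "n > 0" and "k > 0" and "odd k" and "coprime k n"
    and "\<And>x. F x = x ^ ((3 ^ k + 1) div 2)"
  shows "APcN F (-1)"
proof -
  note card = assms(1) and k = assms(4) and cop = assms(5) and Fd = assms(6)
  have three: "(3::'a) = 0" by (rule three_zero[OF card])
  define d :: nat where "d = (3 ^ k + 1) div 2"
  have cnt: "c_diff_count F (-1) a b = card {x. (x + a) ^ d + x ^ d = b}" for a b
    unfolding c_diff_count_def d_def using Fd by simp
  have le: "c_diff_count F (-1) a b \<le> 2" for a b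
    unfolding cnt d_def by (rule count_le2[OF card k cop])
  have d4: "d = 4 * (3 ^ k div 8) + 2" unfolding d_def by (rule d_facts(2)[OF k])
  have m1: "(-1::'a) ^ d = 1" using d4 by (simp add: power_add power_mult)
  have z: "(0::'a) ^ d = 0" using d4 by simp
  have ne: "(0::'a) \<noteq> -1" by simp
  have "{0, -1} \<subseteq> {x::'a. (x + 1) ^ d + x ^ d = 1}" using m1 z by simp
  hence "card {0::'a, -1} \<le> card {x::'a. (x + 1) ^ d + x ^ d = 1}" by (intro card_mono) auto
  hence "2 \<le> c_diff_count F (-1) 1 1" unfolding cnt using ne by simp
  hence c2: "c_diff_count F (-1) 1 1 = 2" using le[of 1 1] by simp
  let ?M = "{c_diff_count F (-1) a b | a b. (-1::'a) \<noteq> 1 \<or> a \<noteq> 0}"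
  have sub: "?M \<subseteq> {..2}" using le by auto
  hence fin: "finite ?M" by (rule finite_subset) simp
  have inM: "2 \<in> ?M" using c2 by (metis (mono_tags, lifting) mem_Collect_eq one_neq_zero)
  have "Max ?M = 2"
    by (rule Max_eqI[OF fin]) (use sub inM in auto)
  thus ?thesis unfolding APcN_def c_diff_uniformity_def .
qed

end
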